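(* For every $\omega>0$ there exist $\Gamma>0$ and $N>0$ such that for every $\beta\in(0,1]$ the two-dimensional system $$\dot x=\omega A_0x-\beta\, b_0\frac{b_0^Tx}{(1+\|x\|^2)^{1/2}},\qquad x\in\mathbb{R}^2,$$ is $SISS_L\!\left(\beta\Gamma,\frac{N}{\beta}\right)$, its origin is globally asymptotically stable, and its linearization at $0$ is asymptotically stable.
   Context: $A_0=\begin{pmatrix}0&1\\-1&0\end{pmatrix}$, $b_0=\begin{pmatrix}0\\1\end{pmatrix}$, $\|\cdot\|$ is the Euclidean norm. Eventually bounded: $f:\mathbb{R}_{\ge0}\to\mathbb{R}^k$ is eventually bounded by $\delta$ if there is $T>0$ with $\|f(t)\|\le\delta$ for all $t\ge T$. $SISS_L(\Delta,N)$ for an input-free system $\dot x=f(x)$: for every $\delta\in(0,\Delta]$ and every bounded measurable $e:\mathbb{R}_{\ge0}\to\mathbb{R}^n$ eventually bounded by $\delta$, every solution of $\dot x=f(x)+e(t)$ is eventually bounded by $N\delta$. *)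

theory Defs
  imports "HOL-Analysis.Analysis"
begin

definition eventually_bounded :: "(real \<Rightarrow> 'a::real_normed_vector) \<Rightarrow> real \<Rightarrow> bool" where
  "eventually_bounded g d \<longleftrightarrow> (\<exists>T>0. \<forall>t\<ge>T. norm (g t) \<le> d)"

text \<open>Caratheodory solution on [0,oo) of x' = f x + e t, in integral form.\<close>
definition is_solution ::
  "('a::euclidean_space \<Rightarrow> 'a) \<Rightarrow> (real \<Rightarrow> 'a) \<Rightarrow> (real \<Rightarrow> 'a) \<Rightarrow> bool" where
  "is_solution f e x \<longleftrightarrow> continuous_on {0..} x \<and>
     (\<forall>t\<ge>0. ((\<lambda>s. f (x s) + e s) has_integral (x t - x 0)) {0..t})"

definition SISS_L :: "real \<Rightarrow> real \<Rightarrow> ('a::euclidean_space \<Rightarrow> 'a) \<Rightarrow> bool" where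
  "SISS_L \<Delta> N f \<longleftrightarrow>
     (\<forall>\<delta>. 0 < \<delta> \<and> \<delta> \<le> \<Delta> \<longrightarrow>
       (\<forall>e. set_borel_measurable lborel {0..} e \<and> bounded (e ` {0..}) \<and> eventually_bounded e \<delta> \<longrightarrow>
          (\<forall>x. is_solution f e x \<longrightarrow> eventually_bounded x (N * \<delta>))))"

definition lyap_stable :: "('a::euclidean_space \<Rightarrow> 'a) \<Rightarrow> bool" where
  "lyap_stable f \<longleftrightarrow> f 0 = 0 \<and>
     (\<forall>\<epsilon>>0. \<exists>\<delta>>0. \<forall>x. is_solution f (\<lambda>_. 0) x \<and> norm (x 0) < \<delta> \<longrightarrow> (\<forall>t\<ge>0. norm (x t) < \<epsilon>))"

definition asym_stable :: "('a::euclidean_space \<Rightarrow> 'a) \<Rightarrow> bool" where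
  "asym_stable f \<longleftrightarrow> lyap_stable f \<and>
     (\<exists>r>0. \<forall>x. is_solution f (\<lambda>_. 0) x \<and> norm (x 0) < r \<longrightarrow> (x \<longlongrightarrow> 0) at_top)"

definition glob_asym_stable :: "('a::euclidean_space \<Rightarrow> 'a) \<Rightarrow> bool" where
  "glob_asym_stable f \<longleftrightarrow> lyap_stable f \<and>
     (\<forall>x. is_solution f (\<lambda>_. 0) x \<longrightarrow> (x \<longlongrightarrow> 0) at_top)"

definition A0 :: "real^2^2" where
  "A0 = vector [vector [0, 1], vector [-1, 0]]"

definition b0 :: "real^2" where
  "b0 = vector [0, 1]"

definition sys :: "real \<Rightarrow> real \<Rightarrow> real^2 \<Rightarrow> real^2" where
  "sys \<omega> \<beta> x = \<omega> *\<^sub>R (A0 *v x) - \<beta> *\<^sub>R ((b0 \<bullet> x) / sqrt (1 + (norm x)\<^sup>2)) *\<^sub>R b0"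

end

theory Submission
  imports Defs
begin

definition kap :: "real \<Rightarrow> real" where "kap \<omega> = min (1/(2*\<omega>)) (\<omega>/2)"

lemma kap_facts:
  assumes "\<omega> > 0"
  shows "kap \<omega> > 0" "kap \<omega> * \<omega> \<le> 1/2" "kap \<omega> \<le> \<omega>/2" "kap \<omega> \<le> 1/2"
proof -
  show "kap \<omega> > 0" using assms by (simp add: kap_def)
  show "kap \<omega> * \<omega> \<le> 1/2"
  proof -
    have "kap \<omega> \<le> 1/(2*\<omega>)" by (simp add: kap_def)
    then have "kap \<omega> * \<omega> \<le> 1/(2*\<omega>) * \<omega>" using assms by (intro mult_right_mono) auto
    also have "\<dots> = 1/2" using assms by simp
    finally show ?thesis by linarith
  qed
  show "kap \<omega> \<le> \<omega>/2" by (simp add: kap_def)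
  show "kap \<omega> \<le> 1/2"
  proof (cases "\<omega> \<ge> 1")
    case True
    have "kap \<omega> \<le> 1/(2*\<omega>)" by (simp add: kap_def)
    also have "\<dots> \<le> 1/2" using True by (simp add: field_simps)
    finally show ?thesis .
  next
    case False
    then show ?thesis by (simp add: kap_def)
  qed
qed

lemma amgm: fixes a b \<omega> :: real assumes "\<omega> > 0" shows "\<bar>a*b\<bar> \<le> \<omega>*a^2/2 + b^2/(2*\<omega>)"
proof -
  have "0 \<le> (\<omega>*\<bar>a\<bar> - \<bar>b\<bar>)^2" by simp
  then have "2*\<omega>*\<bar>a*b\<bar> \<le> \<omega>^2*a^2 + b^2"
    by (simp add: power2_eq_square algebra_simps abs_mult)
  then show ?thesis using assms by (simp add: field_simps power2_eq_square)
qed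

lemma alg_f:
  fixes a b r \<psi> \<beta> \<omega> \<kappa> :: real
  assumes om: "\<omega> > 0" and be: "0 < \<beta>" "\<beta> \<le> 1" and r: "r > 0" "r^2 = 1 + a^2 + b^2"
    and ps: "1/r \<le> \<psi>" "\<psi> \<le> 1" and k: "\<kappa> > 0" "\<kappa>*\<omega> \<le> 1/2" "\<kappa> \<le> \<omega>/2"
  shows "2*(a*(\<omega>*b) + b*(-\<omega>*a - \<beta>*\<psi>*b)) + \<kappa>*\<beta>*(((\<omega>*b)*b + a*(-\<omega>*a-\<beta>*\<psi>*b))/r
           - a*b*(a*(\<omega>*b)+b*(-\<omega>*a-\<beta>*\<psi>*b))/r^3)
         \<le> -(\<kappa>*\<omega>/2)*\<beta>*(a^2+b^2)/r"
proof -
  have r3: "r^3 = r * r^2" by (simp add: power2_eq_square power3_eq_cube)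
  have E: "2*(a*(\<omega>*b) + b*(-\<omega>*a - \<beta>*\<psi>*b)) + \<kappa>*\<beta>*(((\<omega>*b)*b + a*(-\<omega>*a-\<beta>*\<psi>*b))/r
           - a*b*(a*(\<omega>*b)+b*(-\<omega>*a-\<beta>*\<psi>*b))/r^3)
        = -2*\<beta>*\<psi>*b^2 + \<kappa>*\<beta>*\<omega>*(b^2-a^2)/r - \<kappa>*\<beta>*\<beta>*(\<psi>*(a*b)*(1 - b^2/r^2))/r"
    using r(1) by (simp add: r3 field_simps power2_eq_square)
  have t1: "-2*\<beta>*\<psi>*b^2 \<le> -2*\<beta>*b^2/r"
  proof -
    have "\<beta>*b^2/r \<le> \<beta>*b^2*\<psi>" using ps(1) be r
      by (metis mult_left_mono divide_inverse inverse_eq_divide mult_nonneg_nonneg zero_le_power2 less_imp_le)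
    moreover have "-2*\<beta>*\<psi>*b^2 = -2*(\<beta>*b^2*\<psi>)" "-2*\<beta>*b^2/r = -2*(\<beta>*b^2/r)" by simp_all
    ultimately show ?thesis by linarith
  qed
  have q: "0 \<le> (1 - b^2/r^2)" "(1 - b^2/r^2) \<le> 1"
  proof -
    have "b^2 \<le> r^2" using r(2) by (simp add: add_nonneg_nonneg)
    then have "b^2/r^2 \<le> 1" using r(1) by (simp add: divide_le_eq_1)
    then show "0 \<le> (1 - b^2/r^2)" by simp
    show "(1 - b^2/r^2) \<le> 1" by simp
  qed
  have psi0: "\<psi> > 0" using ps(1) r(1) by (meson less_le_trans zero_less_divide_1_iff)
  have t2: "\<bar>\<psi>*(a*b)*(1 - b^2/r^2)\<bar> \<le> \<bar>a*b\<bar>"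
  proof -
    have "\<bar>\<psi>*(a*b)*(1 - b^2/r^2)\<bar> = \<bar>\<psi>\<bar>*\<bar>a*b\<bar>*(1 - b^2/r^2)" using q by (simp add: abs_mult)
    also have "\<dots> \<le> 1*\<bar>a*b\<bar>*1"
      using ps r q psi0 by (intro mult_mono) auto
    finally show ?thesis by linarith
  qed
  have t3: "\<beta>*\<bar>a*b\<bar> \<le> \<omega>*a^2/2 + b^2/(2*\<omega>)"
  proof -
    have "\<beta>*\<bar>a*b\<bar> \<le> \<bar>a*b\<bar>" using be by (intro mult_left_le_one_le) auto
    then show ?thesis using amgm[OF om, of a b] by linarith
  qed
  have t23: "- \<kappa>*\<beta>*\<beta>*(\<psi>*(a*b)*(1 - b^2/r^2))/r \<le> \<kappa>*\<beta>*(\<omega>*a^2/2 + b^2/(2*\<omega>))/r"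
  proof -
    have "- \<kappa>*\<beta>*\<beta>*(\<psi>*(a*b)*(1 - b^2/r^2)) \<le> \<kappa>*\<beta>*(\<beta>*\<bar>a*b\<bar>)"
    proof -
      have "- (\<psi>*(a*b)*(1 - b^2/r^2)) \<le> \<bar>a*b\<bar>" using t2 by linarith
      then have "\<kappa>*\<beta>*\<beta>*(- (\<psi>*(a*b)*(1 - b^2/r^2))) \<le> \<kappa>*\<beta>*\<beta>*\<bar>a*b\<bar>"
        using k be by (intro mult_left_mono) auto
      then show ?thesis by (simp add: algebra_simps)
    qed
    also have "\<dots> \<le> \<kappa>*\<beta>*(\<omega>*a^2/2 + b^2/(2*\<omega>))" using t3 k be by (intro mult_left_mono) auto
    finally have h: "- \<kappa>*\<beta>*\<beta>*(\<psi>*(a*b)*(1 - b^2/r^2)) \<le> \<kappa>*\<beta>*(\<omega>*a^2/2 + b^2/(2*\<omega>))" .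
    show ?thesis using divide_right_mono[OF h, of r] r(1) by simp
  qed
  have br: "-2*b^2 + \<kappa>*\<omega>*(b^2-a^2) + \<kappa>*(\<omega>*a^2/2 + b^2/(2*\<omega>)) \<le> -(\<kappa>*\<omega>/2)*(a^2+b^2)"
  proof -
    define X where "X = \<kappa>*(b^2/(2*\<omega>))"
    define Y where "Y = \<kappa>*\<omega>*b^2"
    define Z where "Z = \<kappa>*\<omega>*a^2"
    define B where "B = b^2"
    have "\<kappa>/(2*\<omega>) \<le> 1/4" using k om by (simp add: field_simps)
    then have "\<kappa>/(2*\<omega>)*b^2 \<le> 1/4*b^2" by (intro mult_right_mono) auto
    then have x: "X \<le> B/4" by (simp add: X_def B_def)
    have "\<kappa>*\<omega>*b^2 \<le> 1/2*b^2" using k(2) by (intro mult_right_mono) auto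
    then have y: "Y \<le> B/2" unfolding Y_def B_def by simp
    have e: "-2*b^2 + \<kappa>*\<omega>*(b^2-a^2) + \<kappa>*(\<omega>*a^2/2 + b^2/(2*\<omega>)) = -2*B + Y - Z + Z/2 + X"
      "-(\<kappa>*\<omega>/2)*(a^2+b^2) = -Z/2 - Y/2"
      unfolding X_def Y_def Z_def B_def by (simp_all add: algebra_simps)
    have "B \<ge> 0" by (simp add: B_def)
    then show ?thesis unfolding e using x y by linarith
  qed
  have "-2*\<beta>*b^2/r + \<kappa>*\<beta>*\<omega>*(b^2-a^2)/r + \<kappa>*\<beta>*(\<omega>*a^2/2 + b^2/(2*\<omega>))/r
       = (\<beta>/r) * (-2*b^2 + \<kappa>*\<omega>*(b^2-a^2) + \<kappa>*(\<omega>*a^2/2 + b^2/(2*\<omega>)))"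
    using r(1) om by (simp add: field_simps)
  also have "\<dots> \<le> (\<beta>/r) * (-(\<kappa>*\<omega>/2)*(a^2+b^2))" using br be r by (intro mult_left_mono) auto
  also have "\<dots> = -(\<kappa>*\<omega>/2)*\<beta>*(a^2+b^2)/r" by (simp add: field_simps)
  finally show ?thesis using E t1 t23 by linarith
qed

lemma barrier:
  fixes \<phi> :: "real \<Rightarrow> real"
  assumes ab: "a \<le> b" and cont: "continuous_on {a..b} \<phi>" and start: "\<phi> a \<le> L"
  and dini: "\<And>u \<epsilon>. a \<le> u \<Longrightarrow> u < b \<Longrightarrow> L \<le> \<phi> u \<Longrightarrow> \<epsilon> > 0 \<Longrightarrow>
      \<exists>\<eta>>0. \<forall>t. u < t \<and> t < u + \<eta> \<longrightarrow> \<phi> t \<le> \<phi> u + \<epsilon> * (t - u)"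
  shows "\<phi> b \<le> L"
proof (rule ccontr)
  assume "\<not> \<phi> b \<le> L"
  then have bL: "\<phi> b > L" by simp
  define \<epsilon> where "\<epsilon> = (\<phi> b - L) / (2 * (b - a + 1))"
  have ep: "\<epsilon> > 0" using bL ab by (simp add: \<epsilon>_def)
  have "\<epsilon> * (b - a) < \<phi> b - L"
  proof -
    have "\<epsilon> * (b - a) \<le> \<epsilon> * (2 * (b - a + 1)) / 2" using ep ab by simp
    also have "\<dots> = (\<phi> b - L) / 2" using ab by (simp add: \<epsilon>_def)
    finally show ?thesis using bL by argo
  qed
  define h where "h r = \<phi> r - L - \<epsilon> * (r - a)" for r
  have hb: "h b > 0" using \<open>\<epsilon> * (b - a) < \<phi> b - L\<close> by (simp add: h_def)
  have ha: "h a \<le> 0" using start by (simp add: h_def)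
  have hc: "continuous_on {a..b} h" unfolding h_def by (intro continuous_intros cont)
  define S where "S = {s \<in> {a..b}. h s > 0}"
  have bS: "b \<in> S" using hb ab by (simp add: S_def)
  have Sne: "S \<noteq> {}" using bS by auto
  have Sbdd: "bdd_below S" by (rule bdd_belowI[of _ a]) (auto simp: S_def)
  define c where "c = Inf S"
  have c_le: "\<And>s. s \<in> S \<Longrightarrow> c \<le> s" unfolding c_def using Sbdd by (simp add: cInf_lower)
  have ac: "a \<le> c" unfolding c_def using Sne by (rule cInf_greatest) (auto simp: S_def)
  have cb: "c \<le> b" using c_le[OF bS] .
  have below: "\<And>r. a \<le> r \<Longrightarrow> r < c \<Longrightarrow> h r \<le> 0"
  proof -
    fix r assume r: "a \<le> r" "r < c"
    show "h r \<le> 0"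
    proof (rule ccontr)
      assume "\<not> h r \<le> 0"
      then have "r \<in> S" using r cb by (auto simp: S_def)
      then show False using c_le r by fastforce
    qed
  qed
  have hcle: "h c \<le> 0"
  proof (cases "c = a")
    case True then show ?thesis using ha by simp
  next
    case False
    with ac have ac': "a < c" by simp
    show ?thesis
    proof (rule ccontr)
      assume "\<not> h c \<le> 0"
      then have hc0: "h c > 0" by simp
      from hc have "\<forall>x\<in>{a..b}. \<forall>e>0. \<exists>d>0. \<forall>x'\<in>{a..b}. dist x' x < d \<longrightarrow> dist (h x') (h x) < e"
        by (simp add: continuous_on_iff)
      then obtain d where d: "d > 0" "\<forall>x'\<in>{a..b}. dist x' c < d \<longrightarrow> dist (h x') (h c) < h c"
        using hc0 ac cb by (meson atLeastAtMost_iff)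
      define r where "r = max a (c - d/2)"
      have r: "a \<le> r" "r < c" "r \<le> b" using d ac' cb by (auto simp: r_def)
      have "dist r c < d" using d ac' by (auto simp: r_def dist_real_def)
      then have "dist (h r) (h c) < h c" using d r by auto
      then have "h r > 0" by (simp add: dist_real_def)
      then show False using below r by fastforce
    qed
  qed
  have cneqb: "c < b" using hcle hb cb by (cases "c = b") auto
  have near: "\<exists>\<eta>>0. \<forall>t. c < t \<and> t < c + \<eta> \<and> t \<le> b \<longrightarrow> h t \<le> 0"
  proof (cases "h c < 0")
    case True
    from hc have "\<forall>x\<in>{a..b}. \<forall>e>0. \<exists>d>0. \<forall>x'\<in>{a..b}. dist x' x < d \<longrightarrow> dist (h x') (h x) < e"
      by (simp add: continuous_on_iff)
    then obtain d where d: "d > 0" "\<forall>x'\<in>{a..b}. dist x' c < d \<longrightarrow> dist (h x') (h c) < - h c"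
      using True ac cb by (meson atLeastAtMost_iff neg_0_less_iff_less)
    show ?thesis
    proof (intro exI[of _ d] conjI allI impI)
      fix t assume t: "c < t \<and> t < c + d \<and> t \<le> b"
      then have "t \<in> {a..b}" "dist t c < d" using ac by (auto simp: dist_real_def)
      then have "dist (h t) (h c) < - h c" using d by auto
      then show "h t \<le> 0" by (simp add: dist_real_def)
    qed (use d in auto)
  next
    case False
    then have hc0: "h c = 0" using hcle by simp
    then have phic: "\<phi> c = L + \<epsilon> * (c - a)" by (simp add: h_def)
    have "L \<le> \<phi> c" using phic ep ac by simp
    from dini[OF ac cneqb this, of "\<epsilon>/2"] ep obtain \<eta> where
      eta: "\<eta> > 0" "\<forall>t. c < t \<and> t < c + \<eta> \<longrightarrow> \<phi> t \<le> \<phi> c + \<epsilon>/2 * (t - c)" by auto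
    show ?thesis
    proof (intro exI[of _ \<eta>] conjI allI impI)
      fix t assume t: "c < t \<and> t < c + \<eta> \<and> t \<le> b"
      then have "\<phi> t \<le> \<phi> c + \<epsilon>/2 * (t - c)" using eta by auto
      moreover have "\<epsilon>/2 * (t - c) \<le> \<epsilon> * (t - c)" using ep t by simp
      ultimately show "h t \<le> 0" using phic by (simp add: h_def algebra_simps)
    qed (use eta in auto)
  qed
  then obtain \<eta> where eta: "\<eta> > 0" "\<forall>t. c < t \<and> t < c + \<eta> \<and> t \<le> b \<longrightarrow> h t \<le> 0" by auto
  have "Inf S < c + \<eta>" using eta by (simp add: c_def)
  then obtain s where s: "s \<in> S" "s < c + \<eta>" using cInf_less_iff[OF Sne Sbdd] by auto
  have "c \<le> s" using c_le s by simp
  moreover have "s \<noteq> c" using s hcle by (auto simp: S_def)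
  ultimately have "c < s" by simp
  then have "h s \<le> 0" using eta s by (auto simp: S_def)
  then show False using s by (simp add: S_def)
qed

lemma dini_step:
  fixes f :: "'a::euclidean_space \<Rightarrow> 'a" and U :: "'a \<Rightarrow> real"
  assumes sol: "is_solution f e x" and fc: "continuous_on UNIV f"
  and dU: "(U has_derivative DU) (at (x u))"
  and eb: "\<And>s. s \<ge> u \<Longrightarrow> norm (e s) \<le> \<delta>" and u: "u \<ge> 0"
  and B: "\<And>v. norm v \<le> \<delta> \<Longrightarrow> DU (f (x u) + v) \<le> B"
  and ep: "\<epsilon> > 0"
  shows "\<exists>\<eta>>0. \<forall>t. u < t \<and> t < u + \<eta> \<longrightarrow> U (x t) \<le> U (x u) + (B + \<epsilon>) * (t - u)"
proof -
  define y where "y = x u"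
  have xc: "continuous_on {0..} x" and xi: "\<And>t. t \<ge> 0 \<Longrightarrow> ((\<lambda>s. f (x s) + e s) has_integral (x t - x 0)) {0..t}"
    using sol by (auto simp: is_solution_def)
  have bl: "bounded_linear DU" and dapp: "\<forall>e>0. \<exists>d>0. \<forall>z. norm (z - y) < d \<longrightarrow> norm (U z - U y - DU (z - y)) \<le> e * norm (z - y)"
    using dU by (auto simp: has_derivative_at_alt y_def)
  obtain K where K: "K > 0" "\<And>z. norm (DU z) \<le> norm z * K"
    using bounded_linear.pos_bounded[OF bl] by blast
  have d0: "\<delta> \<ge> 0" using eb[of u] by (meson norm_ge_zero order_trans order_refl)
  define M where "M = norm (f y) + \<delta> + 1"
  have M: "M > 0" using d0 by (simp add: M_def add_nonneg_pos)
  obtain d2 where d2: "d2 > 0" "\<And>z. norm (z - y) < d2 \<Longrightarrow> norm (U z - U y - DU (z - y)) \<le> (\<epsilon> / (2*M)) * norm (z - y)"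
    using dapp ep M by (metis divide_pos_pos mult_pos_pos zero_less_numeral)
  define \<epsilon>1 where "\<epsilon>1 = min 1 (\<epsilon> / (2*K))"
  have e1: "\<epsilon>1 > 0" "\<epsilon>1 \<le> 1" using ep K
    by (auto simp: \<epsilon>1_def)
  have "\<epsilon>1 \<le> \<epsilon> / (2*K)" by (simp add: \<epsilon>1_def)
  then have "K * \<epsilon>1 \<le> K * (\<epsilon> / (2*K))" using K by (intro mult_left_mono) auto
  then have e1': "K * \<epsilon>1 \<le> \<epsilon>/2" using K by simp
  have fxc: "continuous_on {0..} (\<lambda>s. f (x s))"
    using continuous_on_compose2[OF fc xc] by auto
  then obtain d1 where d1: "d1 > 0" "\<And>s. s \<in> {0..} \<Longrightarrow> dist s u < d1 \<Longrightarrow> dist (f (x s)) (f y) < \<epsilon>1"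
    using u e1 unfolding continuous_on_iff y_def by (metis atLeast_iff)
  define \<eta> where "\<eta> = min d1 (d2 / M)"
  have eta: "\<eta> > 0" using d1 d2 M by (simp add: \<eta>_def)
  show ?thesis
  proof (intro exI[of _ \<eta>] conjI allI impI eta)
    fix t assume t: "u < t \<and> t < u + \<eta>"
    define g where "g = (\<lambda>s. f (x s) + e s)"
    have t0: "t \<ge> 0" using t u by simp
    have git: "(g has_integral (x t - x 0)) {0..t}" using xi[OF t0] by (simp add: g_def)
    have giu: "(g has_integral (x u - x 0)) {0..u}" using xi[OF u] by (simp add: g_def)
    have gint: "g integrable_on {0..t}" using git by blast
    have comb: "integral {0..u} g + integral {u..t} g = integral {0..t} g"
      using Henstock_Kurzweil_Integration.integral_combine[OF u _ gint] t by simp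
    have xd: "x t - x u = integral {u..t} g"
      using comb git giu by (simp add: integral_unique algebra_simps)
    have gut: "g integrable_on {u..t}" using integrable_subinterval_real[OF gint] u by simp
    have fint: "(\<lambda>s. f (x s)) integrable_on {u..t}"
      by (rule integrable_continuous_real, rule continuous_on_subset[OF fxc]) (use u in auto)
    have eint: "e integrable_on {u..t}"
    proof -
      have "(\<lambda>s. g s - f (x s)) integrable_on {u..t}" using integrable_diff[OF gut fint] .
      then show ?thesis by (simp add: g_def)
    qed
    define Ie where "Ie = integral {u..t} e"
    define IF where "IF = integral {u..t} (\<lambda>s. f (x s))"
    have xd2: "x t - x u = IF + Ie"
    proof -
      have "integral {u..t} g = integral {u..t} (\<lambda>s. f (x s)) + integral {u..t} e"
        unfolding g_def by (rule integral_add[OF fint eint])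
      then show ?thesis using xd by (simp add: IF_def Ie_def)
    qed
    have Ieb: "norm Ie \<le> \<delta> * (t - u)"
    proof -
      have "norm Ie \<le> \<delta> * Henstock_Kurzweil_Integration.content {u..t}"
        by (rule has_integral_bound_real[of \<delta> "{}" e Ie u t]) (use d0 eint eb in \<open>auto simp: Ie_def\<close>)
      then show ?thesis using t by simp
    qed
    define r where "r = IF - (t - u) *\<^sub>R f y"
    have rb: "norm r \<le> \<epsilon>1 * (t - u)"
    proof -
      have ci: "((\<lambda>s. f y) has_integral (t - u) *\<^sub>R f y) {u..t}"
        using has_integral_const_real[of "f y" u t] t by simp
      have hi: "((\<lambda>s. f (x s) - f y) has_integral (IF - (t - u) *\<^sub>R f y)) {u..t}"
        using has_integral_diff[OF integrable_integral[OF fint] ci] by (simp add: IF_def)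
      have "norm (IF - (t - u) *\<^sub>R f y) \<le> \<epsilon>1 * Henstock_Kurzweil_Integration.content {u..t}"
      proof (rule has_integral_bound_real[OF _ _ hi])
        fix s assume s: "s \<in> {u..t} - {}"
        then have "s \<in> {0..}" "dist s u < d1" using u t by (auto simp: dist_real_def \<eta>_def)
        then have "dist (f (x s)) (f y) < \<epsilon>1" using d1 by blast
        then show "norm (f (x s) - f y) \<le> \<epsilon>1" by (simp add: dist_norm)
      qed (use e1 in auto)
      then show ?thesis using t by (simp add: r_def)
    qed
    define av where "av = (1 / (t - u)) *\<^sub>R Ie"
    have avb: "norm av \<le> \<delta>"
    proof -
      have "norm av = norm Ie / (t - u)" using t by (simp add: av_def)
      also have "\<dots> \<le> \<delta>" using Ieb t by (simp add: divide_le_eq)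
      finally show ?thesis .
    qed
    have decomp: "x t - y = (t - u) *\<^sub>R (f y + av) + r"
      using xd2 t by (simp add: r_def av_def y_def algebra_simps)
    have DUz: "DU (x t - y) \<le> (t - u) * B + (\<epsilon>/2) * (t - u)"
    proof -
      have "DU (x t - y) = (t - u) * DU (f y + av) + DU r"
        unfolding decomp by (simp add: linear_add[OF bounded_linear.linear[OF bl]] linear_scale[OF bounded_linear.linear[OF bl]])
      moreover have "(t - u) * DU (f y + av) \<le> (t - u) * B"
        using B[OF avb] t by (simp add: y_def)
      moreover have "DU r \<le> (\<epsilon>/2) * (t - u)"
      proof -
        have "DU r \<le> norm r * K" using K(2)[of r] by simp
        also have "\<dots> \<le> \<epsilon>1 * (t - u) * K" using rb K by (simp add: mult_right_mono)
        also have "\<dots> = (K * \<epsilon>1) * (t - u)" by simp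
        also have "\<dots> \<le> (\<epsilon>/2) * (t - u)" using e1' t by (simp add: mult_right_mono)
        finally show ?thesis .
      qed
      ultimately show ?thesis by linarith
    qed
    have nz: "norm (x t - y) \<le> M * (t - u)"
    proof -
      have "norm (x t - y) \<le> (t - u) * norm (f y + av) + norm r"
        unfolding decomp using t by (metis abs_of_pos diff_gt_0_iff_gt norm_scaleR norm_triangle_ineq)
      also have "\<dots> \<le> (t - u) * (norm (f y) + \<delta>) + \<epsilon>1 * (t - u)"
        using rb avb t norm_triangle_ineq[of "f y" av] by (intro add_mono mult_left_mono) auto
      also have "\<dots> \<le> M * (t - u)"
      proof -
        have "\<epsilon>1 * (t - u) \<le> 1 * (t - u)" using e1 t by (intro mult_right_mono) auto
        then show ?thesis by (simp add: M_def algebra_simps)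
      qed
      finally show ?thesis .
    qed
    have "M * (t - u) < d2"
    proof -
      have "\<eta> \<le> d2 / M" by (simp add: \<eta>_def)
      then have "t - u < d2 / M" using t by linarith
      then show ?thesis using M by (simp add: field_simps)
    qed
    then have "norm (x t - y) < d2" using nz by linarith
    then have "norm (U (x t) - U y - DU (x t - y)) \<le> (\<epsilon> / (2*M)) * norm (x t - y)" using d2 by blast
    then have "U (x t) \<le> U y + DU (x t - y) + (\<epsilon> / (2*M)) * norm (x t - y)" by (simp add: abs_le_iff)
    also have "(\<epsilon> / (2*M)) * norm (x t - y) \<le> (\<epsilon> / (2*M)) * (M * (t - u))"
      using nz ep M by (intro mult_left_mono) auto
    also have "(\<epsilon> / (2*M)) * (M * (t - u)) = (\<epsilon>/2) * (t - u)" using M by simp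
    finally have "U (x t) \<le> U y + DU (x t - y) + (\<epsilon>/2) * (t - u)" by simp
    moreover have "(B + \<epsilon>) * (t - u) = (t - u) * B + (\<epsilon>/2) * (t - u) + (\<epsilon>/2) * (t - u)"
      by (simp add: algebra_simps)
    ultimately show "U (x t) \<le> U (x u) + (B + \<epsilon>) * (t - u)" using DUz unfolding y_def by argo
  qed
qed

lemma hd_nth[derivative_intros]: "((\<lambda>x::real^'n. x$i) has_derivative (\<lambda>h. h$i)) F"
  by (simp add: bounded_linear_vec_nth bounded_linear_imp_has_derivative)

definition rho :: "real^2 \<Rightarrow> real" where "rho y = sqrt (1 + (y$1)^2 + (y$2)^2)"

lemma rho_pos: "rho y > 0" unfolding rho_def by (simp add: add_pos_nonneg)

lemma rho_sq: "(rho y)^2 = 1 + (y$1)^2 + (y$2)^2"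
  unfolding rho_def by (simp add: add_nonneg_nonneg)

lemma norm2: "norm (y::real^2) = sqrt ((y$1)^2 + (y$2)^2)"
  by (simp add: norm_vec_def L2_set_def sum_2)

lemma norm2sq: "(norm (y::real^2))^2 = (y$1)^2 + (y$2)^2"
  by (simp add: norm2 add_nonneg_nonneg)

lemma rho_norm: "rho y = sqrt (1 + (norm y)^2)"
  by (simp add: rho_def norm2sq add.assoc)

lemma rho_ge1: "rho y \<ge> 1"
  unfolding rho_def by (simp add: add_nonneg_nonneg)

lemma rho_der: "(rho has_derivative (\<lambda>h. (z$1*h$1+z$2*h$2)/rho z)) (at z)"
proof -
  have p: "0 < 1 + (z$1)^2 + (z$2)^2" by (simp add: add_pos_nonneg)
  show ?thesis unfolding rho_def
  apply (rule derivative_eq_intros refl p)+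
  using p by (auto simp: field_simps power2_eq_square)
qed

lemma q_der: "((\<lambda>y::real^2. y$1 * y$2 / rho y) has_derivative
   (\<lambda>h. (h$1*z$2 + z$1*h$2)/ rho z - z$1*z$2*(z$1*h$1+z$2*h$2)/ (rho z)^3)) (at z)"
  apply (rule derivative_eq_intros refl rho_der)+
  using rho_pos[of z]
  apply (auto simp: field_simps power3_eq_cube)
  done

definition UU :: "real \<Rightarrow> real^2 \<Rightarrow> real" where
  "UU k y = (y$1)^2 + (y$2)^2 + k * (y$1 * y$2 / rho y)"

definition DUU :: "real \<Rightarrow> real^2 \<Rightarrow> real^2 \<Rightarrow> real" where
  "DUU k y h = 2*(y$1*h$1 + y$2*h$2) + k*((h$1*y$2 + y$1*h$2)/rho y - y$1*y$2*(y$1*h$1+y$2*h$2)/(rho y)^3)"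

lemma UU_der: "(UU k has_derivative DUU k y) (at y)"
proof -
  have "((\<lambda>y. (y$1)^2 + (y$2)^2 + k * (y$1 * y$2 / rho y)) has_derivative
     (\<lambda>h. 2 * (y$1) * h$1 + 2 * (y$2) * h$2 + k * ((h$1*y$2 + y$1*h$2)/ rho y - y$1*y$2*(y$1*h$1+y$2*h$2)/ (rho y)^3))) (at y)"
    by (rule derivative_eq_intros refl q_der)+ (simp add: algebra_simps)
  then show ?thesis unfolding UU_def[abs_def] DUU_def by (simp add: algebra_simps)
qed

lemma UU_cont: "continuous_on S (UU k)"
  using UU_der by (meson has_derivative_continuous continuous_at_imp_continuous_on)

lemma cs2: fixes a b c d :: real
  shows "\<bar>a*c + b*d\<bar> \<le> sqrt (a^2+b^2) * sqrt (c^2+d^2)"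
proof -
  have "(a*c + b*d)^2 \<le> (a^2+b^2) * (c^2+d^2)"
  proof -
    have "0 \<le> (a*d - b*c)^2" by simp
    then show ?thesis by (simp add: power2_eq_square algebra_simps)
  qed
  then have "sqrt ((a*c + b*d)^2) \<le> sqrt ((a^2+b^2) * (c^2+d^2))" by (rule real_sqrt_le_mono)
  then show ?thesis by (simp add: real_sqrt_mult)
qed

lemma alg_v:
  fixes a b p1 p2 r k :: real
  assumes r: "r \<ge> 1" "r^2 = 1 + a^2 + b^2" and k: "0 \<le> k" "k \<le> 1/2"
  shows "\<bar>2*(a*p1+b*p2) + k*((p1*b+a*p2)/r - a*b*(a*p1+b*p2)/r^3)\<bar>
           \<le> 3* sqrt(a^2+b^2)* sqrt(p1^2+p2^2)"
proof -
  define n where "n = sqrt(a^2+b^2)"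
  define m where "m = sqrt(p1^2+p2^2)"
  have nm: "0 \<le> n*m" by (simp add: n_def m_def)
  have c1: "\<bar>a*p1+b*p2\<bar> \<le> n*m" using cs2[of a p1 b p2] by (simp add: n_def m_def)
  have c2: "\<bar>p1*b+a*p2\<bar> \<le> n*m" using cs2[of b p1 a p2] by (simp add: n_def m_def algebra_simps)
  have r0: "r > 0" using r by simp
  have t1: "\<bar>(p1*b+a*p2)/r\<bar> \<le> n*m"
  proof -
    have "\<bar>(p1*b+a*p2)/r\<bar> = \<bar>p1*b+a*p2\<bar> / r" using r0 by simp
    also have "\<dots> \<le> \<bar>p1*b+a*p2\<bar>" using r mult_left_mono[of 1 r "\<bar>p1*b+a*p2\<bar>"] by (simp add: divide_le_eq)
    finally show ?thesis using c2 by simp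
  qed
  have ab: "\<bar>a*b\<bar> \<le> r^3/2"
  proof -
    have "\<bar>a*b\<bar> \<le> (a^2+b^2)/2" using amgm[of 1 a b] by simp
    also have "\<dots> \<le> r^2/2" using r by simp
    also have "r^2 \<le> r^3" by (rule power_increasing) (use r in auto)
    then have "r^2/2 \<le> r^3/2" by simp
    finally show ?thesis .
  qed
  have t2: "\<bar>a*b*(a*p1+b*p2)/r^3\<bar> \<le> n*m/2"
  proof -
    have r3: "r^3 > 0" using r0 by simp
    have "\<bar>a*b*(a*p1+b*p2)/r^3\<bar> = (\<bar>a*b\<bar> / r^3) * \<bar>a*p1+b*p2\<bar>" using r3 by (simp add: abs_mult)
    also have "\<dots> \<le> (1/2) * (n*m)"
    proof (rule mult_mono)
      show "\<bar>a*b\<bar> / r^3 \<le> 1/2" using ab r3 by (simp add: divide_le_eq)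
    qed (use c1 in auto)
    finally show ?thesis by simp
  qed
  have tri: "\<bar>2*X + k*(Y - Z)\<bar> \<le> 2*\<bar>X\<bar> + k*(\<bar>Y\<bar> + \<bar>Z\<bar>)" for X Y Z
  proof -
    have "\<bar>2*X + k*(Y - Z)\<bar> \<le> \<bar>2*X\<bar> + \<bar>k*(Y - Z)\<bar>" by (rule abs_triangle_ineq)
    also have "\<bar>k*(Y - Z)\<bar> = k*\<bar>Y - Z\<bar>" using k by (simp add: abs_mult)
    also have "k*\<bar>Y - Z\<bar> \<le> k*(\<bar>Y\<bar> + \<bar>Z\<bar>)" using k abs_triangle_ineq4[of Y Z] by (intro mult_left_mono) auto
    finally show ?thesis by simp
  qed
  have "\<bar>2*(a*p1+b*p2) + k*((p1*b+a*p2)/r - a*b*(a*p1+b*p2)/r^3)\<bar>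
      \<le> 2*\<bar>a*p1+b*p2\<bar> + k*(\<bar>(p1*b+a*p2)/r\<bar> + \<bar>a*b*(a*p1+b*p2)/r^3\<bar>)"
    by (rule tri)
  also have "\<dots> \<le> 2*(n*m) + (1/2)*(n*m + n*m/2)"
    using c1 t1 t2 k by (intro add_mono mult_mono) auto
  also have "\<dots> = (11/4)*(n*m)" by (simp add: algebra_simps)
  also have "\<dots> \<le> 3*(n*m)" using nm by (intro mult_right_mono) auto
  finally show ?thesis by (simp add: n_def m_def)
qed

lemma alg_U:
  fixes a b r k :: real
  assumes r: "r \<ge> 1" and k: "0 \<le> k" "k \<le> 1/2"
  shows "(a^2+b^2)/2 \<le> a^2+b^2 + k*(a*b/r)" "a^2+b^2 + k*(a*b/r) \<le> 3*(a^2+b^2)/2"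
proof -
  have h1: "\<bar>k*(a*b/r)\<bar> \<le> \<bar>a*b\<bar>"
  proof -
    have "\<bar>k*(a*b/r)\<bar> = k * (\<bar>a*b\<bar>/r)" using k r by (simp add: abs_mult)
    also have "\<dots> \<le> 1 * \<bar>a*b\<bar>"
      using k r mult_left_mono[of 1 r "\<bar>a*b\<bar>"] by (intro mult_mono) (auto simp: divide_le_eq)
    finally show ?thesis by simp
  qed
  define S where "S = a^2+b^2"
  define K where "K = k*(a*b/r)"
  have h2: "\<bar>a*b\<bar> \<le> S/2" using amgm[of 1 a b] by (simp add: S_def)
  have "\<bar>K\<bar> \<le> S/2" using h1 h2 unfolding K_def by (rule order_trans)
  then have "K \<le> S/2" "-K \<le> S/2" by (simp_all only: abs_le_iff)
  then have "S/2 \<le> S + K" "S + K \<le> 3*S/2" by linarith+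
  then show "(a^2+b^2)/2 \<le> a^2+b^2 + k*(a*b/r)" "a^2+b^2 + k*(a*b/r) \<le> 3*(a^2+b^2)/2"
    by (simp_all add: S_def K_def)
qed

lemma growth:
  fixes P \<delta> n r :: real
  assumes P: "P > 0" and d: "\<delta> > 0" "12*\<delta> \<le> P" "12*\<delta> \<le> P*n" and n: "n \<ge> 0"
    and r: "r > 0" "r^2 = 1 + n^2"
  shows "-P*n^2/r + 3*n*\<delta> \<le> -3*\<delta>*n"
proof -
  have "(6*\<delta>*r)^2 \<le> (P*n)^2"
  proof -
    have a1: "(12*\<delta>)^2 \<le> P^2" using d by (intro power_mono) auto
    have a2: "(12*\<delta>)^2 \<le> (P*n)^2" using d by (intro power_mono) auto
    have A: "144*\<delta>^2 \<le> P^2*n^2" using a2 by (simp add: power_mult_distrib)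
    have "144*\<delta>^2 \<le> P^2" using a1 by (simp add: power_mult_distrib)
    then have "144*\<delta>^2*n^2 \<le> P^2*n^2" by (simp add: mult_right_mono)
    then have Bb: "144*(\<delta>^2*n^2) \<le> P^2*n^2" by (simp add: mult.assoc)
    have "(6*\<delta>*r)^2 = 36*\<delta>^2*r^2" by (simp add: power_mult_distrib)
    also have "\<dots> = 36*\<delta>^2*(1+n^2)" by (simp only: r(2))
    also have "\<dots> = 36*\<delta>^2 + 36*(\<delta>^2*n^2)" by (simp add: algebra_simps)
    finally have eq: "(6*\<delta>*r)^2 = 36*\<delta>^2 + 36*(\<delta>^2*n^2)" .
    have pn: "(P*n)^2 = P^2*n^2" by (simp add: power_mult_distrib)
    have hl: "\<And>X Y Z W::real. X = 36*Y + 36*Z \<Longrightarrow> 144*Y \<le> W \<Longrightarrow> 144*Z \<le> W \<Longrightarrow> 0 \<le> W \<Longrightarrow> X \<le> W"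
      by linarith
    show ?thesis unfolding pn by (rule hl[OF eq A Bb]) simp
  qed
  then have h: "6*\<delta>*r \<le> P*n" by (rule power2_le_imp_le) (use P n in auto)
  have "6*\<delta>*n \<le> P*n^2/r"
  proof -
    have "6*\<delta>*r*n \<le> P*n*n" by (rule mult_right_mono[OF h n])
    moreover have "6*\<delta>*r*n = 6*\<delta>*n*r" "P*n*n = P*n^2" by (simp_all add: power2_eq_square)
    ultimately have "6*\<delta>*n*r \<le> P*n^2" by simp
    then show ?thesis by (subst pos_le_divide_eq[OF r(1)])
  qed
  moreover have "-P*n^2/r = -(P*n^2/r)" "3*n*\<delta> = 3*(\<delta>*n)" "-3*\<delta>*n = -3*(\<delta>*n)" "6*\<delta>*n = 6*(\<delta>*n)" by simp_all
  ultimately show ?thesis by linarith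
qed
lemma A0_comp: "(A0 *v y)$1 = y$2" "(A0 *v y)$2 = -y$1"
  by (simp_all add: matrix_vector_mul_component A0_def inner_vec_def sum_2)

lemma b0_comp: "b0$1 = 0" "b0$2 = 1" by (simp_all add: b0_def)

lemma b0_inner: "b0 \<bullet> y = y$2" by (simp add: b0_def inner_vec_def sum_2)

definition Gam :: "real \<Rightarrow> real" where "Gam \<omega> = kap \<omega> * \<omega> / 2 / 12"
definition NN :: "real \<Rightarrow> real" where "NN \<omega> = 24 / (kap \<omega> * \<omega> / 2)"

locale gsys =
  fixes \<omega> \<beta> :: real and \<psi> :: "real^2 \<Rightarrow> real" and f :: "real^2 \<Rightarrow> real^2"
  assumes om: "\<omega> > 0" and be: "0 < \<beta>" "\<beta> \<le> 1"
    and psi: "\<And>y. 1 / rho y \<le> \<psi> y" "\<And>y. \<psi> y \<le> 1"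
    and f1: "\<And>y. f y $ 1 = \<omega> * y$2" and f2: "\<And>y. f y $ 2 = -\<omega> * y$1 - \<beta> * \<psi> y * y$2"
    and fc: "continuous_on UNIV f"
begin

abbreviation "kk \<equiv> kap \<omega> * \<beta>"
abbreviation "cc \<equiv> kap \<omega> * \<omega> / 2"

lemma kk: "0 \<le> kk" "kk \<le> 1/2"
proof -
  show "0 \<le> kk" using kap_facts(1)[OF om] be by simp
  have "kk \<le> kap \<omega> * 1" using kap_facts(1)[OF om] be by (intro mult_left_mono) auto
  then show "kk \<le> 1/2" using kap_facts(4)[OF om] by simp
qed

lemma cc_pos: "cc > 0" using kap_facts(1)[OF om] om by simp

lemma DUf: "DUU kk y (f y) \<le> -cc*\<beta>*(norm y)^2/rho y"
proof -
  have "2*(y$1*(\<omega>*y$2) + y$2*(-\<omega>*y$1 - \<beta>*\<psi> y*y$2)) + kap \<omega>*\<beta>*(((\<omega>*y$2)*y$2 + y$1*(-\<omega>*y$1-\<beta>*\<psi> y*y$2))/rho y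
           - y$1*y$2*(y$1*(\<omega>*y$2)+y$2*(-\<omega>*y$1-\<beta>*\<psi> y*y$2))/(rho y)^3)
         \<le> -(kap \<omega>*\<omega>/2)*\<beta>*((y$1)^2+(y$2)^2)/rho y"
    by (rule alg_f[OF om be rho_pos rho_sq psi kap_facts(1)[OF om] kap_facts(2)[OF om] kap_facts(3)[OF om]])
  then show ?thesis unfolding DUU_def f1 f2 norm2sq by simp
qed

lemma DUv: "DUU kk y w \<le> 3 * norm y * norm w"
proof -
  have "\<bar>2*(y$1 * w$1+y$2 * w$2) + kk*((w$1*y$2+y$1 * w$2)/rho y - y$1*y$2*(y$1 * w$1+y$2 * w$2)/(rho y)^3)\<bar>
           \<le> 3 * sqrt((y$1)^2+(y$2)^2) * sqrt((w$1)^2+(w$2)^2)"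
    by (rule alg_v[OF rho_ge1 rho_sq kk])
  then show ?thesis unfolding DUU_def norm2 by (rule abs_le_D1)
qed

lemma DU_lin: "DUU kk y (a + b) = DUU kk y a + DUU kk y b"
proof -
  have "bounded_linear (DUU kk y)" using UU_der by (rule has_derivative_bounded_linear)
  then show ?thesis by (simp add: linear_add bounded_linear.linear)
qed

lemma dini_W:
  assumes sol: "is_solution f e x" and eb: "\<And>s. s \<ge> u \<Longrightarrow> norm (e s) \<le> \<delta>" and u: "u \<ge> 0" and ep: "\<epsilon> > 0"
  shows "\<exists>\<eta>>0. \<forall>t. u < t \<and> t < u + \<eta> \<longrightarrow> UU kk (x t) \<le> UU kk (x u)
     + ((-cc*\<beta>*(norm (x u))^2/rho (x u) + 3*norm (x u)*\<delta>) + \<epsilon>) * (t - u)"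
proof (rule dini_step[OF sol fc UU_der eb u _ ep])
  fix v :: "real^2" assume v: "norm v \<le> \<delta>"
  have "DUU kk (x u) (f (x u) + v) = DUU kk (x u) (f (x u)) + DUU kk (x u) v" by (rule DU_lin)
  also have "\<dots> \<le> -cc*\<beta>*(norm (x u))^2/rho (x u) + 3 * norm (x u) * norm v" using DUf DUv by (rule add_mono)
  also have "3 * norm (x u) * norm v \<le> 3 * norm (x u) * \<delta>" using v by (intro mult_left_mono) auto
  finally show "DUU kk (x u) (f (x u) + v) \<le> -cc*\<beta>*(norm (x u))^2/rho (x u) + 3*norm (x u)*\<delta>" by simp
qed

lemma W_bounds: "(norm y)^2/2 \<le> UU kk y" "UU kk y \<le> 3*(norm y)^2/2"
  using alg_U[OF rho_ge1 kk, of "y$1" "y$2" y] unfolding UU_def norm2sq by auto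

lemma W_cont: assumes "is_solution f e x" "0 \<le> a" shows "continuous_on {a..b} (\<lambda>t. UU kk (x t))"
proof -
  have "continuous_on {0..} x" using assms by (simp add: is_solution_def)
  then have "continuous_on {a..b} x" by (rule continuous_on_subset) (use assms in auto)
  then show ?thesis using continuous_on_compose2[OF UU_cont[of UNIV]] by blast
qed

end
context gsys
begin

lemma core:
  assumes d: "0 < \<delta>" "\<delta> \<le> \<beta> * Gam \<omega>" and ebd: "eventually_bounded e \<delta>" and sol: "is_solution f e x"
  shows "eventually_bounded x (NN \<omega> / \<beta> * \<delta>)"
proof -
  obtain T where T: "T > 0" "\<And>t. t \<ge> T \<Longrightarrow> norm (e t) \<le> \<delta>"
    using ebd by (auto simp: eventually_bounded_def)
  define P where "P = cc * \<beta>"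
  have P: "P > 0" using cc_pos be by (simp add: P_def)
  have dP: "12 * \<delta> \<le> P"
  proof -
    have "\<beta> * Gam \<omega> = P / 12" by (simp add: P_def Gam_def)
    then show ?thesis using d by simp
  qed
  define R where "R = 12 * \<delta> / P"
  have R: "R > 0" using d P by (simp add: R_def)
  define Lv where "Lv = 3 * R^2 / 2"
  define m where "m = 3 * \<delta> * R"
  have m: "m > 0" using d R by (simp add: m_def)
  define W where "W t = UU kk (x t)" for t
  have W0: "W t \<ge> 0" for t using W_bounds(1)[of "x t"] by (simp add: W_def) (smt (verit) zero_le_power2 divide_nonneg_pos)
  have Wc: "continuous_on {a..b} W" if "0 \<le> a" for a b
    using W_cont[OF sol that] by (simp add: W_def[abs_def])
  have key1: "R \<le> norm (x u)" if "Lv \<le> W u" for u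
  proof -
    have "3 * R^2 / 2 \<le> 3 * (norm (x u))^2 / 2" using that W_bounds(2)[of "x u"] by (simp add: Lv_def W_def)
    then have "R^2 \<le> (norm (x u))^2" by simp
    then show ?thesis by (rule power2_le_imp_le) simp
  qed
  have key2: "\<exists>\<eta>>0. \<forall>t. u < t \<and> t < u + \<eta> \<longrightarrow> W t \<le> W u + (-m + \<epsilon>) * (t - u)"
    if u: "u \<ge> T" and nR: "R \<le> norm (x u)" and ep: "\<epsilon> > 0" for u \<epsilon>
  proof -
    have u0: "u \<ge> 0" using u T by simp
    obtain \<eta> where eta: "\<eta> > 0" "\<forall>t. u < t \<and> t < u + \<eta> \<longrightarrow> UU kk (x t) \<le> UU kk (x u)
         + ((-cc*\<beta>*(norm (x u))^2/rho (x u) + 3*norm (x u)*\<delta>) + \<epsilon>) * (t - u)"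
      using dini_W[OF sol _ u0 ep, of \<delta>] T(2) u by fastforce
    define n where "n = norm (x u)"
    have gr: "-P*n^2/rho (x u) + 3*n*\<delta> \<le> -3*\<delta>*n"
    proof (rule growth[OF P d(1) dP])
      have "P * R = 12 * \<delta>" using P by (simp add: R_def)
      moreover have "P * R \<le> P * n" using nR P by (simp add: n_def)
      ultimately show "12 * \<delta> \<le> P * n" by simp
      show "n \<ge> 0" by (simp add: n_def)
      show "rho (x u) > 0" by (rule rho_pos)
      show "(rho (x u))^2 = 1 + n^2" by (simp add: rho_sq n_def norm2sq)
    qed
    have "-3*\<delta>*n \<le> -m"
    proof -
      have "3*\<delta>*R \<le> 3*\<delta>*n" using nR d by (simp add: n_def)
      then show ?thesis by (simp add: m_def)
    qed
    moreover have "-cc*\<beta>*(norm (x u))^2/rho (x u) + 3*norm (x u)*\<delta> = -P*n^2/rho (x u) + 3*n*\<delta>"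
      by (simp add: P_def n_def)
    ultimately have B: "-cc*\<beta>*(norm (x u))^2/rho (x u) + 3*norm (x u)*\<delta> \<le> -m"
      using gr by linarith
    show ?thesis
    proof (intro exI[of _ \<eta>] conjI allI impI eta(1))
      fix t assume t: "u < t \<and> t < u + \<eta>"
      then have "W t \<le> W u + ((-cc*\<beta>*(norm (x u))^2/rho (x u) + 3*norm (x u)*\<delta>) + \<epsilon>) * (t - u)"
        using eta(2) by (simp add: W_def)
      also have "\<dots> \<le> W u + (-m + \<epsilon>) * (t - u)"
        using B t by (intro add_left_mono mult_right_mono) auto
      finally show "W t \<le> W u + (-m + \<epsilon>) * (t - u)" .
    qed
  qed
  have claimA: "\<exists>t1\<ge>T. W t1 \<le> Lv"
  proof (rule ccontr)
    assume "\<not> (\<exists>t1\<ge>T. W t1 \<le> Lv)"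
    then have big: "\<And>t. t \<ge> T \<Longrightarrow> Lv < W t" by force
    define b where "b = T + W T / m + 1"
    have Tb: "T \<le> b" using W0[of T] m by (simp add: b_def)
    have "(\<lambda>t. W t + m * (t - T)) b \<le> W T"
    proof (rule barrier[OF Tb])
      show "continuous_on {T..b} (\<lambda>t. W t + m * (t - T))"
        by (intro continuous_intros Wc) (use T in auto)
      show "W T + m * (T - T) \<le> W T" by simp
      fix u \<epsilon> :: real assume u: "T \<le> u" "u < b" and ep: "\<epsilon> > 0"
      have "R \<le> norm (x u)" using key1 big[OF u(1)] by simp
      then obtain \<eta> where eta: "\<eta> > 0" "\<forall>t. u < t \<and> t < u + \<eta> \<longrightarrow> W t \<le> W u + (-m + \<epsilon>) * (t - u)"
        using key2[OF u(1) _ ep] by blast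
      show "\<exists>\<eta>>0. \<forall>t. u < t \<and> t < u + \<eta> \<longrightarrow> W t + m * (t - T) \<le> W u + m * (u - T) + \<epsilon> * (t - u)"
      proof (intro exI[of _ \<eta>] conjI allI impI eta(1))
        fix t assume "u < t \<and> t < u + \<eta>"
        then have "W t \<le> W u + (-m + \<epsilon>) * (t - u)" using eta(2) by blast
        then show "W t + m * (t - T) \<le> W u + m * (u - T) + \<epsilon> * (t - u)" by (simp add: algebra_simps)
      qed
    qed
    then have "W b + m * (b - T) \<le> W T" by simp
    moreover have "m * (b - T) = W T + m" using m by (simp add: b_def field_simps)
    ultimately have "W b \<le> - m" by simp
    then show False using W0[of b] m by simp
  qed
  then obtain t1 where t1: "t1 \<ge> T" "W t1 \<le> Lv" by blast
  have claimB: "W t \<le> Lv" if t: "t \<ge> t1" for t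
  proof (rule barrier[OF t Wc t1(2)])
    show "0 \<le> t1" using t1 T by simp
    fix u \<epsilon> :: real assume u: "t1 \<le> u" "u < t" "Lv \<le> W u" and ep: "\<epsilon> > 0"
    have uT: "u \<ge> T" using u t1 by simp
    obtain \<eta> where eta: "\<eta> > 0" "\<forall>t. u < t \<and> t < u + \<eta> \<longrightarrow> W t \<le> W u + (-m + \<epsilon>) * (t - u)"
      using key2[OF uT key1[OF u(3)] ep] by blast
    show "\<exists>\<eta>>0. \<forall>t. u < t \<and> t < u + \<eta> \<longrightarrow> W t \<le> W u + \<epsilon> * (t - u)"
    proof (intro exI[of _ \<eta>] conjI allI impI eta(1))
      fix s assume s: "u < s \<and> s < u + \<eta>"
      then have "W s \<le> W u + (-m + \<epsilon>) * (s - u)" using eta(2) by blast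
      also have "\<dots> \<le> W u + \<epsilon> * (s - u)" using m s by (simp add: algebra_simps)
      finally show "W s \<le> W u + \<epsilon> * (s - u)" .
    qed
  qed
  show ?thesis unfolding eventually_bounded_def
  proof (intro exI[of _ t1] conjI allI impI)
    show "t1 > 0" using t1 T by simp
    fix t assume "t1 \<le> t"
    then have "W t \<le> Lv" by (rule claimB)
    then have "(norm (x t))^2 / 2 \<le> 3 * R^2 / 2" using W_bounds(1)[of "x t"] by (simp add: W_def Lv_def)
    then have "(norm (x t))^2 \<le> 3 * R^2" by simp
    moreover have "R^2 \<ge> 0" by simp
    ultimately have "(norm (x t))^2 \<le> 4 * R^2" by linarith
    then have "(norm (x t))^2 \<le> (2 * R)^2" by (simp add: power_mult_distrib)
    then have "norm (x t) \<le> 2 * R" by (rule power2_le_imp_le) (use R in simp)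
    also have "2 * R = NN \<omega> / \<beta> * \<delta>"
      using cc_pos be by (simp add: R_def P_def NN_def field_simps)
    finally show "norm (x t) \<le> NN \<omega> / \<beta> * \<delta>" .
  qed
qed

end
context gsys
begin

lemma lyap_bound:
  assumes sol: "is_solution f (\<lambda>_. 0) x" and t: "t \<ge> 0"
  shows "norm (x t) \<le> 2 * norm (x 0)"
proof -
  define W where "W t = UU kk (x t)" for t
  have "W t \<le> W 0"
  proof (rule barrier[OF t])
    show "continuous_on {0..t} W" using W_cont[OF sol, of 0 t] by (simp add: W_def[abs_def])
    show "W 0 \<le> W 0" by simp
    fix u \<epsilon> :: real assume u: "0 \<le> u" "u < t" "W 0 \<le> W u" and ep: "\<epsilon> > 0"
    obtain \<eta> where eta: "\<eta> > 0" "\<forall>s. u < s \<and> s < u + \<eta> \<longrightarrow> UU kk (x s) \<le> UU kk (x u)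
         + ((-cc*\<beta>*(norm (x u))^2/rho (x u) + 3*norm (x u)*0) + \<epsilon>) * (s - u)"
      using dini_W[OF sol _ u(1) ep, of 0] by auto
    have B: "-cc*\<beta>*(norm (x u))^2/rho (x u) + 3*norm (x u)*0 \<le> 0"
      using cc_pos be rho_pos[of "x u"] by simp
    show "\<exists>\<eta>>0. \<forall>s. u < s \<and> s < u + \<eta> \<longrightarrow> W s \<le> W u + \<epsilon> * (s - u)"
    proof (intro exI[of _ \<eta>] conjI allI impI eta(1))
      fix s assume s: "u < s \<and> s < u + \<eta>"
      then have "W s \<le> W u + ((-cc*\<beta>*(norm (x u))^2/rho (x u) + 3*norm (x u)*0) + \<epsilon>) * (s - u)"
        using eta(2) by (simp add: W_def)
      also have "\<dots> \<le> W u + (0 + \<epsilon>) * (s - u)"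
        using B s by (intro add_left_mono mult_right_mono) auto
      finally show "W s \<le> W u + \<epsilon> * (s - u)" by simp
    qed
  qed
  then have "(norm (x t))^2/2 \<le> 3*(norm (x 0))^2/2"
    using W_bounds(1)[of "x t"] W_bounds(2)[of "x 0"] by (simp add: W_def)
  then have "(norm (x t))^2 \<le> 3*(norm (x 0))^2" by simp
  moreover have "(norm (x 0))^2 \<ge> 0" by simp
  ultimately have "(norm (x t))^2 \<le> 4 * (norm (x 0))^2" by linarith
  then have "(norm (x t))^2 \<le> (2 * norm (x 0))^2" by (simp add: power_mult_distrib)
  then show ?thesis by (rule power2_le_imp_le) simp
qed

lemma f0: "f 0 = 0"
  by (simp add: vec_eq_iff forall_2 f1 f2)

lemma lyap: "lyap_stable f"
  unfolding lyap_stable_def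
proof (intro conjI f0 allI impI)
  fix \<epsilon> :: real assume ep: "\<epsilon> > 0"
  show "\<exists>\<delta>>0. \<forall>x. is_solution f (\<lambda>_. 0) x \<and> norm (x 0) < \<delta> \<longrightarrow> (\<forall>t\<ge>0. norm (x t) < \<epsilon>)"
  proof (intro exI[of _ "\<epsilon>/2"] conjI allI impI)
    fix x t assume h: "is_solution f (\<lambda>_. 0) x \<and> norm (x 0) < \<epsilon>/2" and t: "(t::real) \<ge> 0"
    then have "norm (x t) \<le> 2 * norm (x 0)" using lyap_bound by blast
    then show "norm (x t) < \<epsilon>" using h by simp
  qed (use ep in simp)
qed

lemma Gam_pos: "Gam \<omega> > 0" using cc_pos by (simp add: Gam_def)
lemma NN_pos: "NN \<omega> > 0" using cc_pos by (simp add: NN_def)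

lemma conv:
  assumes sol: "is_solution f (\<lambda>_. 0) x"
  shows "(x \<longlongrightarrow> 0) at_top"
proof (rule tendstoI)
  fix \<epsilon> :: real assume ep: "\<epsilon> > 0"
  define \<delta> where "\<delta> = min (\<beta> * Gam \<omega>) (\<epsilon> * \<beta> / (2 * NN \<omega>))"
  have d: "0 < \<delta>" "\<delta> \<le> \<beta> * Gam \<omega>" using be Gam_pos NN_pos ep by (auto simp: \<delta>_def)
  have "eventually_bounded (\<lambda>_::real. 0::real^2) \<delta>"
    unfolding eventually_bounded_def using d by (intro exI[of _ 1]) auto
  from core[OF d this sol] obtain T where T: "T > 0" "\<And>t. t \<ge> T \<Longrightarrow> norm (x t) \<le> NN \<omega> / \<beta> * \<delta>"
    by (auto simp: eventually_bounded_def)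
  have "NN \<omega> / \<beta> * \<delta> \<le> NN \<omega> / \<beta> * (\<epsilon> * \<beta> / (2 * NN \<omega>))"
    using be NN_pos by (intro mult_left_mono) (auto simp: \<delta>_def)
  also have "\<dots> = \<epsilon> / 2" using be NN_pos by (simp add: field_simps)
  finally have b: "NN \<omega> / \<beta> * \<delta> \<le> \<epsilon> / 2" .
  show "\<forall>\<^sub>F t in at_top. dist (x t) 0 < \<epsilon>"
    unfolding eventually_at_top_linorder
  proof (intro exI[of _ T] allI impI)
    fix t assume "t \<ge> T"
    then have "norm (x t) \<le> \<epsilon> / 2" using T(2) b by (meson order_trans)
    then show "dist (x t) 0 < \<epsilon>" using ep by simp
  qed
qed

lemma gas: "glob_asym_stable f"
  unfolding glob_asym_stable_def using lyap conv by blast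

lemma asym: "asym_stable f"
  unfolding asym_stable_def using lyap conv by (intro conjI exI[of _ 1]) auto

lemma siss: "SISS_L (\<beta> * Gam \<omega>) (NN \<omega> / \<beta>) f"
  unfolding SISS_L_def using core by blast

end

lemma sys_comp: "sys \<omega> \<beta> y $ 1 = \<omega> * y$2" "sys \<omega> \<beta> y $ 2 = -\<omega> * y$1 - \<beta> * (1 / rho y) * y$2"
  by (simp_all add: sys_def A0_comp b0_comp b0_inner rho_norm)

theorem lemma3:
  fixes \<omega> :: real
  assumes "\<omega> > 0"
  shows "\<exists>\<Gamma>>0. \<exists>N>0. \<forall>\<beta>. 0 < \<beta> \<and> \<beta> \<le> 1 \<longrightarrow>
           SISS_L (\<beta> * \<Gamma>) (N / \<beta>) (sys \<omega> \<beta>) \<and>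
           glob_asym_stable (sys \<omega> \<beta>) \<and>
           (\<exists>L. (sys \<omega> \<beta> has_derivative L) (at 0) \<and> asym_stable L)"
proof -
  have cp: "kap \<omega> * \<omega> / 2 > 0" using kap_facts(1)[OF assms] assms by simp
  have gp: "Gam \<omega> > 0" "NN \<omega> > 0" using cp by (simp_all add: Gam_def NN_def)
  have main: "SISS_L (\<beta> * Gam \<omega>) (NN \<omega> / \<beta>) (sys \<omega> \<beta>) \<and>
           glob_asym_stable (sys \<omega> \<beta>) \<and>
           (\<exists>L. (sys \<omega> \<beta> has_derivative L) (at 0) \<and> asym_stable L)" if b: "0 < \<beta> \<and> \<beta> \<le> 1" for \<beta>
  proof (intro conjI)
  have pos: "0 < 1 + (norm x)^2" for x :: "real^2" by (simp add: add_pos_nonneg)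
  have sc: "continuous_on UNIV (sys \<omega> \<beta>)"
    unfolding sys_def[abs_def]
    by (intro continuous_intros) (metis pos real_sqrt_gt_zero less_irrefl)
  have r1: "1 / rho y \<le> 1" for y using rho_ge1[of y] by simp
  interpret S: gsys \<omega> \<beta> "\<lambda>y. 1 / rho y" "sys \<omega> \<beta>"
  proof
    show "\<omega> > 0" by (rule assms)
    show "0 < \<beta>" "\<beta> \<le> 1" using b by auto
    show "1 / rho y \<le> 1 / rho y" for y by simp
    show "1 / rho y \<le> 1" for y by (rule r1)
    show "sys \<omega> \<beta> y $ 1 = \<omega> * y $ 2" for y by (rule sys_comp(1))
    show "sys \<omega> \<beta> y $ 2 = - \<omega> * y $ 1 - \<beta> * (1 / rho y) * y $ 2" for y by (rule sys_comp(2))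
    show "continuous_on UNIV (sys \<omega> \<beta>)" by (rule sc)
  qed
  show "SISS_L (\<beta> * Gam \<omega>) (NN \<omega> / \<beta>) (sys \<omega> \<beta>)" by (rule S.siss)
  show "glob_asym_stable (sys \<omega> \<beta>)" by (rule S.gas)
  define L where "L = (\<lambda>h. \<omega> *\<^sub>R (A0 *v h) - (\<beta> * (b0 \<bullet> h)) *\<^sub>R b0)"
  have der: "(sys \<omega> \<beta> has_derivative L) (at 0)"
  proof -
    have e: "sys \<omega> \<beta> = (\<lambda>y. \<omega> *\<^sub>R (A0 *v y) - \<beta> *\<^sub>R ((b0 \<bullet> y) / sqrt (1 + y \<bullet> y)) *\<^sub>R b0)"
      by (rule ext) (simp add: sys_def power2_norm_eq_inner)
    show ?thesis unfolding e L_def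
      apply (rule derivative_eq_intros refl matrix_vector_mul_bounded_linear[THEN bounded_linear.has_derivative] | simp)+
      done
  qed
  have lc: "continuous_on UNIV L" unfolding L_def by (intro continuous_intros)
  interpret T: gsys \<omega> \<beta> "\<lambda>y. 1" L
  proof
    show "\<omega> > 0" by (rule assms)
    show "0 < \<beta>" "\<beta> \<le> 1" using b by auto
    show "1 / rho y \<le> 1" for y by (rule r1)
    show "1 \<le> (1::real)" by simp
    show "L y $ 1 = \<omega> * y $ 2" for y by (simp add: L_def A0_comp b0_comp)
    show "L y $ 2 = - \<omega> * y $ 1 - \<beta> * 1 * y $ 2" for y by (simp add: L_def A0_comp b0_comp b0_inner)
    show "continuous_on UNIV L" by (rule lc)
  qed
  show "\<exists>L. (sys \<omega> \<beta> has_derivative L) (at 0) \<and> asym_stable L"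
    using der T.asym by blast
  qed
  show ?thesis using gp main by blast
qed
end
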